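(* Let $n\ge3$ and $\sigma\in\mathcal{H}_n$ with complexity $P=P(\sigma)\ge2$. Then for any finite generating set of $\mathcal{H}_n$, the word length $|\sigma|$ of $\sigma$ with respect to it satisfies $$P/C\le|\sigma|\le KP\log P,$$ where the constants $C,K>0$ depend only on the choice of generating set.
   Context: Let $\mathbb{N}=\{1,2,3,\dots\}$, $\mathbb{Z}_n$ the integers modulo $n$, $R_n=\mathbb{Z}_n\times\mathbb{N}$ (ray $i$ is $\{(i,k):k\in\mathbb{N}\}$). Permutations act on the right. The Houghton group $\mathcal{H}_n$ is the group of permutations $\sigma$ of $R_n$ for which there exist $N\ge0$ and integers $t_i(\sigma)$ with $(i,k)\sigma=(i,k+t_i(\sigma))$ for all $i\in\mathbb{Z}_n$, $k\ge N$; for $n\ge3$ it is finitely generated. For $\sigma\in\mathcal{H}_n$ and $i\in\mathbb{Z}_n$, $p_i(\sigma)$ is the largest integer $k\ge1$ such that $(i,k)\sigma\neq(i,k+t_i(\sigma))$ (this inequality holding automatically when $k+t_i(\sigma)\le0$), and $p_i(\sigma)=0$ if there is no such $k$. The complexity of $\sigma$ is $P(\sigma)=\sum_{i\in\mathbb{Z}_n}p_i(\sigma)$. *)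

theory Defs
  imports Complex_Main
begin

type_synonym point = "nat \<times> nat"
type_synonym perm = "point \<Rightarrow> point"

definition rays :: "nat \<Rightarrow> point set" where
  "rays n = {(i, k). i < n \<and> 1 \<le> k}"

text \<open>Elements of the Houghton group H_n: permutations of R_n (extended by the identity
  outside R_n) that are eventually translations on each ray.\<close>
definition houghton :: "nat \<Rightarrow> perm \<Rightarrow> bool" where
  "houghton n \<sigma> \<longleftrightarrow> bij_betw \<sigma> (rays n) (rays n) \<and> (\<forall>x. x \<notin> rays n \<longrightarrow> \<sigma> x = x) \<and>
     (\<exists>N::nat. \<exists>t::nat \<Rightarrow> int. \<forall>i<n. \<forall>k\<ge>N.
        1 \<le> int k + t i \<and> \<sigma> (i, k) = (i, nat (int k + t i)))"

definition transl :: "perm \<Rightarrow> nat \<Rightarrow> int" where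
  "transl \<sigma> i = (THE t. \<exists>N::nat. \<forall>k\<ge>N. 1 \<le> int k + t \<and> \<sigma> (i, k) = (i, nat (int k + t)))"

definition defect :: "perm \<Rightarrow> nat \<Rightarrow> nat \<Rightarrow> bool" where
  "defect \<sigma> i k \<longleftrightarrow> int k + transl \<sigma> i \<le> 0 \<or> \<sigma> (i, k) \<noteq> (i, nat (int k + transl \<sigma> i))"

definition pcomp :: "perm \<Rightarrow> nat \<Rightarrow> nat" where
  "pcomp \<sigma> i = (if \<exists>k\<ge>1. defect \<sigma> i k then Max {k. 1 \<le> k \<and> defect \<sigma> i k} else 0)"

definition complexity :: "nat \<Rightarrow> perm \<Rightarrow> nat" where
  "complexity n \<sigma> = (\<Sum>i<n. pcomp \<sigma> i)"

text \<open>Product of a word; permutations act on the right, so the word [s1,...,sm]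
  denotes s1 s2 ... sm, i.e. the map x |-> (...((x)s1)s2...)sm.\<close>
definition word_prod :: "perm list \<Rightarrow> perm" where
  "word_prod ws = foldl (\<lambda>acc s. s \<circ> acc) id ws"

definition gen_letters :: "perm set \<Rightarrow> perm set" where
  "gen_letters S = S \<union> inv ` S"

definition generates_houghton :: "nat \<Rightarrow> perm set \<Rightarrow> bool" where
  "generates_houghton n S \<longleftrightarrow> S \<subseteq> {\<sigma>. houghton n \<sigma>} \<and>
     (\<forall>\<sigma>. houghton n \<sigma> \<longrightarrow> (\<exists>ws. set ws \<subseteq> gen_letters S \<and> word_prod ws = \<sigma>))"

definition word_length :: "perm set \<Rightarrow> perm \<Rightarrow> nat" where
  "word_length S \<sigma> = (LEAST m. \<exists>ws. length ws = m \<and> set ws \<subseteq> gen_letters S \<and> word_prod ws = \<sigma>)"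

end

theory Submission
  imports Defs
begin

lemma transl_eqI:
  assumes "\<forall>k\<ge>N. 1 \<le> int k + t \<and> \<sigma> (i, k) = (i, nat (int k + t))"
  shows "transl \<sigma> i = t"
  unfolding transl_def
proof (rule the_equality)
  show "\<exists>N. \<forall>k\<ge>N. 1 \<le> int k + t \<and> \<sigma> (i, k) = (i, nat (int k + t))" using assms by blast
next
  fix t' assume "\<exists>N. \<forall>k\<ge>N. 1 \<le> int k + t' \<and> \<sigma> (i, k) = (i, nat (int k + t'))"
  then obtain N' where N': "\<forall>k\<ge>N'. 1 \<le> int k + t' \<and> \<sigma> (i, k) = (i, nat (int k + t'))" by blast
  define k where "k = max N N'"
  have "1 \<le> int k + t' \<and> \<sigma> (i, k) = (i, nat (int k + t'))" using N' k_def by simp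
  moreover have "1 \<le> int k + t \<and> \<sigma> (i, k) = (i, nat (int k + t))" using assms k_def by simp
  ultimately have "nat (int k + t') = nat (int k + t)" "1 \<le> int k + t'" "1 \<le> int k + t" by auto
  then show "t' = t" by (smt (verit) eq_nat_nat_iff)
qed

lemma houghton_transl:
  assumes "houghton n \<sigma>" "i < n"
  shows "\<exists>N. \<forall>k\<ge>N. 1 \<le> int k + transl \<sigma> i \<and> \<sigma> (i, k) = (i, nat (int k + transl \<sigma> i))"
proof -
  obtain N t where Nt: "\<forall>i<n. \<forall>k\<ge>N. 1 \<le> int k + t i \<and> \<sigma> (i, k) = (i, nat (int k + t i))"
    using assms(1) unfolding houghton_def by blast
  then have "transl \<sigma> i = t i" using assms(2) by (intro transl_eqI) blast
  then show ?thesis using Nt assms(2) by metis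
qed

lemma defect_finite:
  assumes "houghton n \<sigma>" "i < n"
  shows "finite {k. 1 \<le> k \<and> defect \<sigma> i k}"
proof -
  obtain N where N: "\<forall>k\<ge>N. 1 \<le> int k + transl \<sigma> i \<and> \<sigma> (i, k) = (i, nat (int k + transl \<sigma> i))"
    using houghton_transl[OF assms] by blast
  have "{k. 1 \<le> k \<and> defect \<sigma> i k} \<subseteq> {..N}"
  proof
    fix k assume "k \<in> {k. 1 \<le> k \<and> defect \<sigma> i k}"
    then have "defect \<sigma> i k" by simp
    then show "k \<in> {..N}" using N[rule_format, of k] unfolding defect_def by (cases "N \<le> k") auto
  qed
  then show ?thesis using finite_subset by blast
qed

lemma nondefect:
  assumes "houghton n \<sigma>" "i < n" "pcomp \<sigma> i < k"
  shows "1 \<le> int k + transl \<sigma> i \<and> \<sigma> (i, k) = (i, nat (int k + transl \<sigma> i))"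
proof -
  have "\<not> defect \<sigma> i k"
  proof
    assume d: "defect \<sigma> i k"
    have k1: "1 \<le> k" using assms(3) by simp
    then have "\<exists>k\<ge>1. defect \<sigma> i k" using d by blast
    then have "pcomp \<sigma> i = Max {k. 1 \<le> k \<and> defect \<sigma> i k}" unfolding pcomp_def by simp
    moreover have "k \<le> Max {k. 1 \<le> k \<and> defect \<sigma> i k}"
      using defect_finite[OF assms(1,2)] d k1 by (intro Max_ge) auto
    ultimately show False using assms(3) by simp
  qed
  then show ?thesis unfolding defect_def by auto
qed

lemma pcomp_le:
  assumes "\<And>k. 1 \<le> k \<Longrightarrow> defect \<sigma> i k \<Longrightarrow> k \<le> B"
  shows "pcomp \<sigma> i \<le> B"
proof (cases "\<exists>k\<ge>1. defect \<sigma> i k")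
  case True
  have fin: "finite {k. 1 \<le> k \<and> defect \<sigma> i k}"
    by (rule finite_subset[of _ "{..B}"]) (use assms in auto)
  have "pcomp \<sigma> i = Max {k. 1 \<le> k \<and> defect \<sigma> i k}" using True unfolding pcomp_def by simp
  also have "\<dots> \<le> B" using fin True assms by (intro Max.boundedI) auto
  finally show ?thesis .
next
  case False then show ?thesis unfolding pcomp_def by auto
qed

lemma pcomp_ge_neg:
  assumes "houghton n \<sigma>" "i < n" "transl \<sigma> i < 0"
  shows "nat (- transl \<sigma> i) \<le> pcomp \<sigma> i"
proof (rule ccontr)
  assume "\<not> ?thesis"
  then have "pcomp \<sigma> i < nat (- transl \<sigma> i)" by simp
  from nondefect[OF assms(1,2) this] assms(3) show False by simp
qed

lemma pcomp_transl_nonneg: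
  assumes "houghton n \<sigma>" "i < n"
  shows "0 \<le> int (pcomp \<sigma> i) + transl \<sigma> i"
  using pcomp_ge_neg[OF assms] by (cases "transl \<sigma> i < 0") auto

lemma houghton_bij:
  assumes "houghton n \<sigma>"
  shows "bij \<sigma>"
proof -
  have b: "bij_betw \<sigma> (rays n) (rays n)" and o: "\<forall>x. x \<notin> rays n \<longrightarrow> \<sigma> x = x"
    using assms unfolding houghton_def by auto
  have "bij_betw \<sigma> (rays n \<union> (- rays n)) (rays n \<union> (- rays n))"
  proof (rule bij_betw_combine[OF b])
    have "bij_betw id (- rays n) (- rays n)" by simp
    then show "bij_betw \<sigma> (- rays n) (- rays n)" using o by (subst bij_betw_cong[of _ _ id]) auto
  qed simp
  then show ?thesis by simp
qed

lemma houghton_fix: "houghton n \<sigma> \<Longrightarrow> x \<notin> rays n \<Longrightarrow> \<sigma> x = x"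
  unfolding houghton_def by blast

lemma houghton_comp:
  assumes hc: "houghton n c" and hs: "houghton n s"
  shows "houghton n (s \<circ> c)"
    and "\<And>i. i < n \<Longrightarrow> transl (s \<circ> c) i = transl c i + transl s i"
    and "\<And>i. i < n \<Longrightarrow> pcomp (s \<circ> c) i \<le> pcomp c i + pcomp s i"
proof -
  have key: "1 \<le> int k + (transl c i + transl s i) \<and> (s \<circ> c) (i, k) = (i, nat (int k + (transl c i + transl s i)))"
    if i: "i < n" and k: "pcomp c i + pcomp s i < k" for i k
  proof -
    have c1: "1 \<le> int k + transl c i \<and> c (i, k) = (i, nat (int k + transl c i))"
      using nondefect[OF hc i] k by simp
    have "pcomp s i < nat (int k + transl c i)"
    proof (cases "transl c i < 0")
      case True
      then have "nat (- transl c i) \<le> pcomp c i" using pcomp_ge_neg[OF hc i] by simp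
      then show ?thesis using k c1 True by linarith
    next
      case False then show ?thesis using k by linarith
    qed
    from nondefect[OF hs i this] c1 show ?thesis by (simp add: add.assoc)
  qed
  then have tr: "transl (s \<circ> c) i = transl c i + transl s i" if "i < n" for i
    using that by (intro transl_eqI[of "pcomp c i + pcomp s i + 1"]) auto
  then show "\<And>i. i < n \<Longrightarrow> transl (s \<circ> c) i = transl c i + transl s i" .
  show "houghton n (s \<circ> c)"
    unfolding houghton_def
  proof (intro conjI allI impI)
    show "bij_betw (s \<circ> c) (rays n) (rays n)"
      using hc hs unfolding houghton_def by (meson bij_betw_trans)
  next
    fix x assume "x \<notin> rays n" then show "(s \<circ> c) x = x" by (simp add: houghton_fix[OF hc] houghton_fix[OF hs])
  next
    show "\<exists>N t. \<forall>i<n. \<forall>k\<ge>N. 1 \<le> int k + t i \<and> (s \<circ> c) (i, k) = (i, nat (int k + t i))"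
      apply (rule exI[of _ "Suc (\<Sum>i<n. pcomp c i + pcomp s i)"])
      apply (rule exI[of _ "\<lambda>i. transl c i + transl s i"])
    proof (intro allI impI)
      fix i k assume i: "i < n" and k: "Suc (\<Sum>i<n. pcomp c i + pcomp s i) \<le> k"
      have "pcomp c i + pcomp s i \<le> (\<Sum>i<n. pcomp c i + pcomp s i)"
        using i by (intro member_le_sum) auto
      then show "1 \<le> int k + (transl c i + transl s i) \<and> (s \<circ> c) (i, k) = (i, nat (int k + (transl c i + transl s i)))"
        using key[OF i] k by simp
    qed
  qed
  fix i assume i: "i < n"
  show "pcomp (s \<circ> c) i \<le> pcomp c i + pcomp s i"
  proof (rule pcomp_le)
    fix k assume "1 \<le> k" "defect (s \<circ> c) i k"
    then show "k \<le> pcomp c i + pcomp s i"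
      using key[OF i, of k] tr[OF i] unfolding defect_def by force
  qed
qed

lemma houghton_inv:
  assumes hs: "houghton n s"
  shows "houghton n (inv s)"
proof -
  have bs: "bij s" using houghton_bij[OF hs] .
  have b: "bij_betw s (rays n) (rays n)" using hs unfolding houghton_def by blast
  have invs: "inv s (s x) = x" for x using inv_f_f[OF bij_is_inj[OF bs]] .
  show ?thesis unfolding houghton_def
  proof (intro conjI allI impI)
    show "bij_betw (inv s) (rays n) (rays n)"
    proof -
      have bi: "bij_betw (inv_into (rays n) s) (rays n) (rays n)" using b by (rule bij_betw_inv_into)
      have eq: "inv_into (rays n) s y = inv s y" if "y \<in> rays n" for y
      proof -
        have "y \<in> s ` rays n" using b that by (simp add: bij_betw_def)
        then obtain x where x: "x \<in> rays n" "y = s x" by blast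
        have "inv_into (rays n) s (s x) = x" using x(1) b by (meson bij_betw_imp_inj_on inv_into_f_f)
        then show ?thesis using x invs[of x] by simp
      qed
      have "bij_betw (inv s) (rays n) (rays n) = bij_betw (inv_into (rays n) s) (rays n) (rays n)"
        by (rule bij_betw_cong) (simp add: eq)
      then show ?thesis using bi by simp
    qed
  next
    fix x assume "x \<notin> rays n"
    then have "s x = x" using houghton_fix[OF hs] by simp
    then show "inv s x = x" using invs[of x] by simp
  next
    show "\<exists>N t. \<forall>i<n. \<forall>k\<ge>N. 1 \<le> int k + t i \<and> inv s (i, k) = (i, nat (int k + t i))"
      apply (rule exI[of _ "Suc (\<Sum>i<n. pcomp s i + nat (transl s i))"])
      apply (rule exI[of _ "\<lambda>i. - transl s i"])
    proof (intro allI impI)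
      fix i k assume i: "i < n" and k: "Suc (\<Sum>i<n. pcomp s i + nat (transl s i)) \<le> k"
      have "pcomp s i + nat (transl s i) \<le> (\<Sum>i<n. pcomp s i + nat (transl s i))"
        using i by (intro member_le_sum) auto
      define m where "m = nat (int k - transl s i)"
      have km: "int m = int k - transl s i" unfolding m_def using k \<open>pcomp s i + nat (transl s i) \<le> _\<close> by linarith
      have lt: "pcomp s i < m" using k km \<open>pcomp s i + nat (transl s i) \<le> _\<close> by linarith
      have "nat (int m + transl s i) = k" using km by simp
      then have "s (i, m) = (i, k)" using nondefect[OF hs i lt] by simp
      then have "inv s (i, k) = (i, m)" using invs[of "(i, m)"] by simp
      then show "1 \<le> int k + - transl s i \<and> inv s (i, k) = (i, nat (int k + - transl s i))"
        using lt km unfolding m_def by simp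
    qed
  qed
qed

lemma houghton_id: "houghton n id"
  unfolding houghton_def by (auto intro!: exI[of _ "\<lambda>i. 0"] exI[of _ 1])

lemma pcomp_id: "pcomp id i = 0"
proof -
  have "transl id i = 0" by (rule transl_eqI[of 1]) auto
  then show ?thesis by (intro le_0_eq[THEN iffD1] pcomp_le) (auto simp: defect_def)
qed

definition psh :: "nat \<Rightarrow> nat \<Rightarrow> perm" where
  "psh i j x = (if x = (i, 1) then (j, 1) else if fst x = i \<and> 2 \<le> snd x then (i, snd x - 1)
     else if fst x = j \<and> 1 \<le> snd x then (j, snd x + 1) else x)"

lemma psh_inv: "i \<noteq> j \<Longrightarrow> psh j i (psh i j x) = x"
  unfolding psh_def by (cases x) auto

lemma psh_zero: "snd x = 0 \<Longrightarrow> psh i j x = x"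
  unfolding psh_def by (cases x) auto

lemma psh_other: "fst x \<noteq> i \<Longrightarrow> fst x \<noteq> j \<Longrightarrow> psh i j x = x"
  unfolding psh_def by (cases x) auto

lemma psh_i1: "psh i j (i, 1) = (j, 1)" unfolding psh_def by simp
lemma psh_i: "2 \<le> k \<Longrightarrow> psh i j (i, k) = (i, k - 1)" unfolding psh_def by simp
lemma psh_j: "i \<noteq> j \<Longrightarrow> 1 \<le> k \<Longrightarrow> psh i j (j, k) = (j, k + 1)" unfolding psh_def by simp

lemma houghton_psh:
  assumes "i < n" "j < n" "i \<noteq> j"
  shows "houghton n (psh i j)"
  unfolding houghton_def
proof (intro conjI allI impI)
  have inv1: "psh j i (psh i j x) = x" and inv2: "psh i j (psh j i x) = x" for x
    using psh_inv assms(3) by auto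
  have into: "psh a b x \<in> rays n" if "x \<in> rays n" "a < n" "b < n" for a b x
    using that unfolding psh_def rays_def by (cases x) auto
  show "bij_betw (psh i j) (rays n) (rays n)"
    by (rule bij_betw_byWitness[of _ "psh j i"]) (use inv1 inv2 into assms in auto)
next
  fix x assume "x \<notin> rays n" then show "psh i j x = x"
    using assms unfolding psh_def rays_def by (cases x) auto
next
  show "\<exists>N t. \<forall>ia<n. \<forall>k\<ge>N. 1 \<le> int k + t ia \<and> psh i j (ia, k) = (ia, nat (int k + t ia))"
    apply (rule exI[of _ 2])
    apply (rule exI[of _ "\<lambda>a. if a = i then -1 else if a = j then 1 else 0"])
    using assms(3) unfolding psh_def by auto
qed

definition wp :: "(nat \<times> nat) list \<Rightarrow> perm" where
  "wp ws = word_prod (map (\<lambda>(i, j). psh i j) ws)"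

lemma foldl_wp: "foldl (\<lambda>acc s. s \<circ> acc) (a::perm) ys = foldl (\<lambda>acc s. s \<circ> acc) id ys \<circ> a"
proof (induction ys arbitrary: a)
  case Nil then show ?case by simp
next
  case (Cons y ys)
  have "foldl (\<lambda>acc s. s \<circ> acc) a (y # ys) = foldl (\<lambda>acc s. s \<circ> acc) (y \<circ> a) ys" by simp
  also have "\<dots> = foldl (\<lambda>acc s. s \<circ> acc) id ys \<circ> (y \<circ> a)" by (rule Cons.IH)
  also have "\<dots> = (foldl (\<lambda>acc s. s \<circ> acc) id ys \<circ> y) \<circ> a" by (simp add: comp_assoc)
  also have "foldl (\<lambda>acc s. s \<circ> acc) id ys \<circ> y = foldl (\<lambda>acc s. s \<circ> acc) y ys" by (simp only: Cons.IH[of y])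
  also have "\<dots> = foldl (\<lambda>acc s. s \<circ> acc) id (y # ys)" by simp
  finally show ?case .
qed

lemma word_prod_append: "word_prod (xs @ ys) = word_prod ys \<circ> word_prod xs"
  unfolding word_prod_def foldl_append by (rule foldl_wp)

lemma word_prod_Nil: "word_prod [] = id" unfolding word_prod_def by simp
lemma word_prod_single: "word_prod [s] = s" unfolding word_prod_def by simp

lemma wp_Nil[simp]: "wp [] = id" unfolding wp_def by (simp add: word_prod_Nil)
lemma wp_append[simp]: "wp (xs @ ys) = wp ys \<circ> wp xs" unfolding wp_def by (simp add: word_prod_append)
lemma wp_single[simp]: "wp [(i, j)] = psh i j" unfolding wp_def by (simp add: word_prod_single)
lemma wp_Cons: "wp ((i, j) # ys) = wp ys \<circ> psh i j"
  using wp_append[of "[(i,j)]" ys] by simp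

definition invw :: "(nat \<times> nat) list \<Rightarrow> (nat \<times> nat) list" where
  "invw ws = rev (map (\<lambda>(i, j). (j, i)) ws)"

lemma invw_invw: "invw (invw ws) = ws"
  unfolding invw_def by (induction ws) auto

lemma length_invw[simp]: "length (invw ws) = length ws" unfolding invw_def by simp

lemma set_invw: "set (invw ws) = (\<lambda>(i, j). (j, i)) ` set ws" unfolding invw_def by simp

lemma invw_inv:
  assumes "\<forall>(i, j)\<in>set ws. i \<noteq> j"
  shows "wp (invw ws) (wp ws x) = x"
  using assms
proof (induction ws arbitrary: x)
  case Nil then show ?case by (simp add: invw_def)
next
  case (Cons a ws)
  obtain i j where a: "a = (i, j)" by (cases a)
  have "invw (a # ws) = invw ws @ [(j, i)]" unfolding invw_def a by simp
  then have "wp (invw (a # ws)) (wp (a # ws) x) = psh j i (wp (invw ws) (wp ws (psh i j x)))"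
    unfolding a by (simp add: wp_Cons)
  also have "\<dots> = psh j i (psh i j x)" using Cons by simp
  also have "\<dots> = x" using Cons.prems a psh_inv by simp
  finally show ?case .
qed

definition letters :: "nat \<Rightarrow> (nat \<times> nat) set" where
  "letters n = {(i, j). i < n \<and> j < n \<and> i \<noteq> j}"

lemma invw_letters: "set ws \<subseteq> letters n \<Longrightarrow> set (invw ws) \<subseteq> letters n"
  unfolding set_invw letters_def by auto

lemma invw_inv_letters:
  "set ws \<subseteq> letters n \<Longrightarrow> wp (invw ws) (wp ws x) = x"
  by (rule invw_inv) (auto simp: letters_def)

lemma invw_inv_letters2:
  "set ws \<subseteq> letters n \<Longrightarrow> wp ws (wp (invw ws) x) = x"
  using invw_inv_letters[of "invw ws" n x] invw_letters[of ws n] by (simp add: invw_invw)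

lemma psh_fix0: "snd x = 0 \<Longrightarrow> wp ws x = x"
proof (induction ws arbitrary: x rule: rev_induct)
  case Nil then show ?case by simp
next
  case (snoc a ws) then show ?case by (cases a) (simp add: psh_zero)
qed

lemma rep_wp:
  assumes "i \<noteq> 0"
  shows "1 \<le> j \<Longrightarrow> wp (replicate m (i, 0)) (i, m + j) = (i, j)"
    and "1 \<le> k \<Longrightarrow> wp (replicate m (i, 0)) (0, k) = (0, k + m)"
    and "fst x \<noteq> i \<Longrightarrow> fst x \<noteq> 0 \<Longrightarrow> wp (replicate m (i, 0)) x = x"
proof (induction m arbitrary: j k)
  case 0
  { case 1 then show ?case by simp }
  { case 2 then show ?case by simp }
  { case 3 then show ?case by simp }
next
  case (Suc m)
  { case 1
    have "psh i 0 (i, Suc m + j) = (i, m + j)" using 1 by (subst psh_i) auto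
    then show ?case using Suc.IH(1)[OF 1] by (simp add: wp_Cons)
  }
  { case 2
    have "psh i 0 (0, k) = (0, k + 1)" using 2 assms by (subst psh_j) auto
    then show ?case using Suc.IH(2)[of "k+1"] by (simp add: wp_Cons)
  }
  { case 3
    then show ?case using Suc.IH(3) by (simp add: wp_Cons psh_other)
  }
qed

definition gw :: "(nat \<Rightarrow> nat) \<Rightarrow> nat list \<Rightarrow> (nat \<times> nat) list" where
  "gw M js = concat (map (\<lambda>i. replicate (M i) (i, 0)) js)"

lemma gw_Cons: "gw M (a # js) = replicate (M a) (a, 0) @ gw M js"
  unfolding gw_def by simp

lemma gw_fix:
  assumes "fst x \<notin> set js" "fst x \<noteq> 0" "0 \<notin> set js"
  shows "wp (gw M js) x = x"
  using assms
proof (induction js)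
  case Nil then show ?case by (simp add: gw_def)
next
  case (Cons a js)
  have a0: "a \<noteq> 0" using Cons by auto
  have "wp (replicate (M a) (a, 0)) x = x" using rep_wp(3)[OF a0] Cons.prems by simp
  then show ?case using Cons by (simp add: gw_Cons)
qed

lemma gw_zero:
  assumes "0 \<notin> set js" "1 \<le> k"
  shows "wp (gw M js) (0, k) = (0, k + sum_list (map M js))"
  using assms
proof (induction js arbitrary: k)
  case Nil then show ?case by (simp add: gw_def)
next
  case (Cons a js)
  have a0: "a \<noteq> 0" using Cons by auto
  have "wp (replicate (M a) (a, 0)) (0, k) = (0, k + M a)" using rep_wp(2)[OF a0] Cons.prems by simp
  moreover have "wp (gw M js) (0, k + M a) = (0, k + M a + sum_list (map M js))"
    using Cons.prems by (intro Cons.IH) auto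
  ultimately show ?case by (simp add: gw_Cons add.assoc)
qed

lemma gw_ray:
  assumes "distinct js" "0 \<notin> set js" "i \<in> set js" "1 \<le> j"
  shows "wp (gw M js) (i, M i + j) = (i, j)"
  using assms
proof (induction js)
  case Nil then show ?case by simp
next
  case (Cons a js)
  have a0: "a \<noteq> 0" using Cons by auto
  show ?case
  proof (cases "i = a")
    case True
    then have "wp (replicate (M a) (a, 0)) (i, M i + j) = (i, j)" using rep_wp(1)[OF a0] Cons.prems by simp
    moreover have "wp (gw M js) (i, j) = (i, j)" using Cons.prems True by (intro gw_fix) auto
    ultimately show ?thesis by (simp add: gw_Cons)
  next
    case False
    have "i \<noteq> 0"
    proof
      assume "i = 0" then show False using Cons.prems(2,3) by simp
    qed
    then have "wp (replicate (M a) (a, 0)) (i, M i + j) = (i, M i + j)" using rep_wp(3)[OF a0, of "(i, M i + j)"] False by simp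
    moreover have "wp (gw M js) (i, M i + j) = (i, j)" using Cons.prems False by (intro Cons.IH) auto
    ultimately show ?thesis by (simp add: gw_Cons)
  qed
qed

lemma gw_length: "length (gw M js) = sum_list (map M js)"
  unfolding gw_def by (induction js) auto

lemma gw_letters: "set js \<subseteq> {1..<n} \<Longrightarrow> set (gw M js) \<subseteq> letters n"
  unfolding gw_def letters_def by auto

fun posT :: "bool list \<Rightarrow> nat \<Rightarrow> nat" where
  "posT [] k = 0"
| "posT (b # bs) k = (if b then (if k = 1 then 1 else posT bs (k - 1) + 1) else posT bs k + 1)"

fun posF :: "bool list \<Rightarrow> nat \<Rightarrow> nat" where
  "posF [] k = 0"
| "posF (b # bs) k = (if \<not> b then (if k = 1 then 1 else posF bs (k - 1) + 1) else posF bs k + 1)"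

definition ct :: "bool list \<Rightarrow> nat" where "ct bs = length (filter id bs)"
definition cf :: "bool list \<Rightarrow> nat" where "cf bs = length (filter Not bs)"

lemma ct_Cons[simp]: "ct (b # bs) = (if b then Suc (ct bs) else ct bs)" unfolding ct_def by simp
lemma cf_Cons[simp]: "cf (b # bs) = (if b then cf bs else Suc (cf bs))" unfolding cf_def by simp
lemma ct_Nil[simp]: "ct [] = 0" unfolding ct_def by simp
lemma cf_Nil[simp]: "cf [] = 0" unfolding cf_def by simp
lemma ct_cf: "ct bs + cf bs = length bs" by (induction bs) auto

fun mw :: "nat \<Rightarrow> nat \<Rightarrow> nat \<Rightarrow> bool list \<Rightarrow> (nat \<times> nat) list" where
  "mw r u v [] = []"
| "mw r u v (b # bs) = ((if b then r else u), v) # mw r u v bs @ [(v, r)]"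

lemma mw_length: "length (mw r u v bs) = 2 * length bs" by (induction bs) auto

lemma mw_letters: "r < n \<Longrightarrow> u < n \<Longrightarrow> v < n \<Longrightarrow> r \<noteq> v \<Longrightarrow> u \<noteq> v \<Longrightarrow> set (mw r u v bs) \<subseteq> letters n"
  by (induction bs) (auto simp: letters_def)

lemma mw_Cons_app: "wp (mw r u v (b # bs)) x = psh v r (wp (mw r u v bs) (psh (if b then r else u) v x))"
  by (simp add: wp_Cons)

declare mw.simps(2)[simp del]

lemma posT_ge1: "1 \<le> k \<Longrightarrow> k \<le> ct bs \<Longrightarrow> 1 \<le> posT bs k"
  by (induction bs arbitrary: k) auto

lemma posF_ge1: "1 \<le> k \<Longrightarrow> k \<le> cf bs \<Longrightarrow> 1 \<le> posF bs k"
  by (induction bs arbitrary: k) auto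

locale tri =
  fixes r u v :: nat
  assumes ru: "r \<noteq> u" and rv: "r \<noteq> v" and uv: "u \<noteq> v"
begin

lemma mw_fixv: "wp (mw r u v bs) (v, k) = (v, k)"
proof (induction bs arbitrary: k)
  case Nil then show ?case by simp
next
  case (Cons b bs)
  show ?case
  proof (cases "k = 0")
    case True then show ?thesis by (simp add: psh_fix0)
  next
    case False
    have "psh (if b then r else u) v (v, k) = (v, k + 1)" using False rv uv by (subst psh_j) auto
    moreover have "psh v r (v, k + 1) = (v, k)" using False by (subst psh_i) auto
    ultimately show ?thesis by (simp add: mw_Cons_app Cons.IH)
  qed
qed

lemma mw_fix:
  assumes "fst x \<noteq> r" "fst x \<noteq> u"
  shows "wp (mw r u v bs) x = x"
proof (cases "fst x = v")
  case True
  then show ?thesis using mw_fixv[of bs "snd x"] by (cases x) auto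
next
  case False
  then show ?thesis using assms
  proof (induction bs)
    case Nil then show ?case by simp
  next
    case (Cons b bs)
    then show ?case by (simp add: mw_Cons_app psh_other)
  qed
qed

lemma mw_T: "1 \<le> k \<Longrightarrow> k \<le> ct bs \<Longrightarrow> wp (mw r u v bs) (r, k) = (r, posT bs k)"
proof (induction bs arbitrary: k)
  case Nil then show ?case by simp
next
  case (Cons b bs)
  show ?case
  proof (cases b)
    case True
    show ?thesis
    proof (cases "k = 1")
      case k1: True
      have "psh r v (r, 1) = (v, 1)" by (rule psh_i1)
      moreover have "psh v r (v, 1) = (r, 1)" by (rule psh_i1)
      ultimately show ?thesis using True k1 by (simp add: mw_Cons_app mw_fixv)
    next
      case False
      then have k2: "2 \<le> k" using Cons.prems by simp
      have "psh r v (r, k) = (r, k - 1)" using k2 by (rule psh_i)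
      moreover have "wp (mw r u v bs) (r, k - 1) = (r, posT bs (k - 1))"
        using Cons.prems True k2 by (intro Cons.IH) auto
      moreover have "1 \<le> posT bs (k - 1)" using Cons.prems True k2 by (intro posT_ge1) auto
      moreover have "psh v r (r, posT bs (k - 1)) = (r, posT bs (k - 1) + 1)"
        using calculation(3) rv by (intro psh_j) auto
      ultimately show ?thesis using True False by (simp add: mw_Cons_app)
    qed
  next
    case False
    have "psh u v (r, k) = (r, k)" using ru rv by (intro psh_other) auto
    moreover have "wp (mw r u v bs) (r, k) = (r, posT bs k)"
      using Cons.prems False by (intro Cons.IH) auto
    moreover have "1 \<le> posT bs k" using Cons.prems False by (intro posT_ge1) auto
    moreover have "psh v r (r, posT bs k) = (r, posT bs k + 1)"
      using calculation(3) rv by (intro psh_j) auto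
    ultimately show ?thesis using False by (simp add: mw_Cons_app)
  qed
qed

lemma mw_F: "1 \<le> k \<Longrightarrow> k \<le> cf bs \<Longrightarrow> wp (mw r u v bs) (u, k) = (r, posF bs k)"
proof (induction bs arbitrary: k)
  case Nil then show ?case by simp
next
  case (Cons b bs)
  show ?case
  proof (cases b)
    case False
    show ?thesis
    proof (cases "k = 1")
      case k1: True
      have "psh u v (u, 1) = (v, 1)" by (rule psh_i1)
      moreover have "psh v r (v, 1) = (r, 1)" by (rule psh_i1)
      ultimately show ?thesis using False k1 by (simp add: mw_Cons_app mw_fixv)
    next
      case k: False
      then have k2: "2 \<le> k" using Cons.prems by simp
      have "psh u v (u, k) = (u, k - 1)" using k2 by (rule psh_i)
      moreover have "wp (mw r u v bs) (u, k - 1) = (r, posF bs (k - 1))"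
        using Cons.prems False k2 by (intro Cons.IH) auto
      moreover have "1 \<le> posF bs (k - 1)" using Cons.prems False k2 by (intro posF_ge1) auto
      moreover have "psh v r (r, posF bs (k - 1)) = (r, posF bs (k - 1) + 1)"
        using calculation(3) rv by (intro psh_j) auto
      ultimately show ?thesis using False k by (simp add: mw_Cons_app)
    qed
  next
    case True
    have "psh r v (u, k) = (u, k)" using ru uv by (intro psh_other) auto
    moreover have "wp (mw r u v bs) (u, k) = (r, posF bs k)"
      using Cons.prems True by (intro Cons.IH) auto
    moreover have "1 \<le> posF bs k" using Cons.prems True by (intro posF_ge1) auto
    moreover have "psh v r (r, posF bs k) = (r, posF bs k + 1)"
      using calculation(3) rv by (intro psh_j) auto
    ultimately show ?thesis using True by (simp add: mw_Cons_app)
  qed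
qed

lemma mw_Ttail: "ct bs < k \<Longrightarrow> wp (mw r u v bs) (r, k) = (r, k + cf bs)"
proof (induction bs arbitrary: k)
  case Nil then show ?case by simp
next
  case (Cons b bs)
  show ?case
  proof (cases b)
    case True
    then have k2: "2 \<le> k" using Cons.prems by simp
    have "psh r v (r, k) = (r, k - 1)" using k2 by (rule psh_i)
    moreover have "wp (mw r u v bs) (r, k - 1) = (r, k - 1 + cf bs)"
      using Cons.prems True by (intro Cons.IH) auto
    moreover have "psh v r (r, k - 1 + cf bs) = (r, k - 1 + cf bs + 1)"
      using k2 rv by (intro psh_j) auto
    ultimately show ?thesis using True k2 by (simp add: mw_Cons_app)
  next
    case False
    then have k1: "1 \<le> k" using Cons.prems by simp
    have "psh u v (r, k) = (r, k)" using ru rv by (intro psh_other) auto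
    moreover have "wp (mw r u v bs) (r, k) = (r, k + cf bs)"
      using Cons.prems False by (intro Cons.IH) auto
    moreover have "psh v r (r, k + cf bs) = (r, k + cf bs + 1)"
      using k1 rv by (intro psh_j) auto
    ultimately show ?thesis using False by (simp add: mw_Cons_app)
  qed
qed

lemma mw_Ftail: "cf bs < k \<Longrightarrow> wp (mw r u v bs) (u, k) = (u, k - cf bs)"
proof (induction bs arbitrary: k)
  case Nil then show ?case by simp
next
  case (Cons b bs)
  show ?case
  proof (cases b)
    case False
    then have k2: "2 \<le> k" using Cons.prems by simp
    have "psh u v (u, k) = (u, k - 1)" using k2 by (rule psh_i)
    moreover have "wp (mw r u v bs) (u, k - 1) = (u, k - 1 - cf bs)"
      using Cons.prems False by (intro Cons.IH) auto
    moreover have "psh v r (u, k - 1 - cf bs) = (u, k - 1 - cf bs)"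
      using ru uv by (intro psh_other) auto
    ultimately show ?thesis using False k2 by (simp add: mw_Cons_app)
  next
    case True
    have "psh r v (u, k) = (u, k)" using ru uv by (intro psh_other) auto
    moreover have "wp (mw r u v bs) (u, k) = (u, k - cf bs)"
      using Cons.prems True by (intro Cons.IH) auto
    moreover have "psh v r (u, k - cf bs) = (u, k - cf bs)"
      using ru uv by (intro psh_other) auto
    ultimately show ?thesis using True by (simp add: mw_Cons_app)
  qed
qed

end

definition pf :: "nat \<Rightarrow> (nat \<Rightarrow> nat) \<Rightarrow> nat \<Rightarrow> perm" where
  "pf r f m x = (if fst x = r \<and> 1 \<le> snd x \<and> snd x \<le> m then (r, f (snd x)) else x)"

definition TS :: "bool list \<Rightarrow> nat set" where
  "TS bs = {t. 1 \<le> t \<and> t \<le> length bs \<and> bs ! (t - 1)}"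

lemma posF_posT: "posF bs k = posT (map Not bs) k"
  by (induction bs arbitrary: k) auto

lemma cf_ct: "cf bs = ct (map Not bs)"
  unfolding cf_def ct_def by (induction bs) auto

lemma posT_TS: "1 \<le> k \<Longrightarrow> k \<le> ct bs \<Longrightarrow> posT bs k \<in> TS bs"
proof (induction bs arbitrary: k)
  case Nil then show ?case by simp
next
  case (Cons b bs)
  show ?case
  proof (cases b)
    case True
    show ?thesis
    proof (cases "k = 1")
      case True then show ?thesis using \<open>b\<close> by (simp add: TS_def)
    next
      case False
      then have "posT bs (k - 1) \<in> TS bs" using Cons.prems \<open>b\<close> by (intro Cons.IH) auto
      then show ?thesis using \<open>b\<close> False by (auto simp: TS_def)
    qed
  next
    case False
    then have "posT bs k \<in> TS bs" using Cons.prems by (intro Cons.IH) auto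
    then show ?thesis using False by (auto simp: TS_def)
  qed
qed

lemma posT_mono: "1 \<le> k \<Longrightarrow> k < k' \<Longrightarrow> k' \<le> ct bs \<Longrightarrow> posT bs k < posT bs k'"
proof (induction bs arbitrary: k k')
  case Nil then show ?case by simp
next
  case (Cons b bs)
  show ?case
  proof (cases b)
    case True
    show ?thesis
    proof (cases "k = 1")
      case k1: True
      then have "1 \<le> posT bs (k' - 1)" using True Cons.prems by (intro posT_ge1) auto
      then show ?thesis using True Cons.prems k1 by simp
    next
      case False
      then have "posT bs (k - 1) < posT bs (k' - 1)" using Cons.prems True by (intro Cons.IH) auto
      then show ?thesis using True False Cons.prems by simp
    qed
  next
    case False
    then have "posT bs k < posT bs k'" using Cons.prems by (intro Cons.IH) auto
    then show ?thesis using False by simp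
  qed
qed

lemma TS_posT: "t \<in> TS bs \<Longrightarrow> \<exists>k. 1 \<le> k \<and> k \<le> ct bs \<and> posT bs k = t"
proof (induction bs arbitrary: t)
  case Nil then show ?case by (simp add: TS_def)
next
  case (Cons b bs)
  show ?case
  proof (cases "t = 1")
    case True
    then have b: b using Cons.prems by (simp add: TS_def)
    show ?thesis using b True by (intro exI[of _ 1]) simp
  next
    case False
    then have "t - 1 \<in> TS bs" using Cons.prems by (auto simp: TS_def nth_Cons')
    then obtain k where k: "1 \<le> k" "k \<le> ct bs" "posT bs k = t - 1" using Cons.IH by blast
    show ?thesis
    proof (cases b)
      case True
      then show ?thesis using k False Cons.prems by (intro exI[of _ "k + 1"]) (auto simp: TS_def)
    next
      case b: False
      then show ?thesis using k False Cons.prems by (intro exI[of _ k]) (auto simp: TS_def)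
    qed
  qed
qed

lemma posT_bij: "bij_betw (posT bs) {1..ct bs} (TS bs)"
proof -
  have "inj_on (posT bs) {1..ct bs}"
  proof (rule inj_onI)
    fix x y assume "x \<in> {1..ct bs}" "y \<in> {1..ct bs}" "posT bs x = posT bs y"
    then show "x = y" using posT_mono[of x y bs] posT_mono[of y x bs]
      by (cases x y rule: linorder_cases) auto
  qed
  moreover have "posT bs ` {1..ct bs} = TS bs"
    using posT_TS TS_posT by fastforce
  ultimately show ?thesis by (simp add: bij_betw_def)
qed

lemma pf_small:
  assumes "m \<le> 1" "bij_betw f {1..m} {1..m}"
  shows "pf r f m = id"
proof
  fix x
  show "pf r f m x = id x"
  proof (cases "fst x = r \<and> 1 \<le> snd x \<and> snd x \<le> m")
    case True
    then have "snd x = 1" "m = 1" using assms by auto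
    then have "f (snd x) = 1" using assms(2) bij_betwE by fastforce
    then show ?thesis using True \<open>snd x = 1\<close> unfolding pf_def by (cases x) auto
  next
    case False then show ?thesis unfolding pf_def by auto
  qed
qed

definition bs0 :: "nat \<Rightarrow> nat \<Rightarrow> bool list" where
  "bs0 a b = replicate a True @ replicate b False"

lemma bs0_ct: "ct (bs0 a b) = a" unfolding bs0_def ct_def by simp
lemma bs0_cf: "cf (bs0 a b) = b" unfolding bs0_def cf_def by simp
lemma bs0_len: "length (bs0 a b) = a + b" unfolding bs0_def by simp

lemma posF_repF: "1 \<le> j \<Longrightarrow> j \<le> b \<Longrightarrow> posF (replicate b False) j = j"
  by (induction b arbitrary: j) auto

lemma bs0_posT: "1 \<le> k \<Longrightarrow> k \<le> a \<Longrightarrow> posT (bs0 a b) k = k"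
  unfolding bs0_def by (induction a arbitrary: k) auto

lemma bs0_posF: "1 \<le> j \<Longrightarrow> j \<le> b \<Longrightarrow> posF (bs0 a b) j = a + j"
  unfolding bs0_def by (induction a arbitrary: j) (auto simp: posF_repF)

lemma split_step:
  assumes tri: "tri r u v" and lt: "r < n" "u < n" "v < n"
    and bij: "bij_betw f {1..m} {1..m}" and ab: "a \<le> m" "b = m - a"
    and IHa: "\<And>g. bij_betw g {1..a} {1..a} \<Longrightarrow> \<exists>ws. set ws \<subseteq> letters n \<and> length ws \<le> La \<and> wp ws = pf r g a"
    and IHb: "\<And>g. bij_betw g {1..b} {1..b} \<Longrightarrow> \<exists>ws. set ws \<subseteq> letters n \<and> length ws \<le> Lb \<and> wp ws = pf u g b"
  shows "\<exists>ws. set ws \<subseteq> letters n \<and> length ws \<le> La + Lb + 4 * m \<and> wp ws = pf r f m"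
proof -
  interpret tri r u v by (rule tri)
  define E where "E = f ` {1..a}"
  define bs where "bs = map (\<lambda>t. t \<in> E) [1..<m+1]"
  have len: "length bs = m" unfolding bs_def by (simp del: upt_Suc)
  have nth: "bs ! (t - 1) = (t \<in> E)" if "1 \<le> t" "t \<le> m" for t
    unfolding bs_def using that by (subst nth_map) (auto simp del: upt_Suc)
  have injf: "inj_on f {1..m}" using bij by (simp add: bij_betw_def)
  have fm: "f ` {1..m} = {1..m}" using bij by (simp add: bij_betw_def)
  have Esub: "E \<subseteq> {1..m}" unfolding E_def using fm ab by auto
  have TS1: "TS bs = E" unfolding TS_def using nth Esub len by auto
  have TS2: "TS (map Not bs) = {1..m} - E" unfolding TS_def using nth len by auto
  have fE: "bij_betw f {1..a} E" unfolding E_def bij_betw_def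
    using injf ab by (auto intro: inj_on_subset)
  have cardE: "card E = a" using bij_betw_same_card[OF fE] by simp
  have cta: "ct bs = a" using bij_betw_same_card[OF posT_bij[of bs]] TS1 cardE by simp
  have cfb: "cf bs = b" using ct_cf[of bs] len cta ab by simp
  have pTb: "bij_betw (posT bs) {1..a} E" using posT_bij[of bs] TS1 cta by simp
  have pFeq: "posF bs = posT (map Not bs)" by (rule ext) (rule posF_posT)
  have pFb: "bij_betw (posF bs) {1..b} ({1..m} - E)"
    using posT_bij[of "map Not bs"] TS2 cfb cf_ct[of bs] pFeq by simp
  define f2 where "f2 = (\<lambda>j. f (a + j))"
  have f2b: "bij_betw f2 {1..b} ({1..m} - E)"
  proof -
    have hb: "bij_betw (\<lambda>j. a + j) {1..b} {a+1..m}"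
      unfolding bij_betw_def using ab by (auto simp: inj_on_def image_iff intro!: exI[of _ "x - a" for x])
    have "f ` ({1..m} - {1..a}) = f ` {1..m} - f ` {1..a}"
      by (rule inj_on_image_set_diff[OF injf]) (use ab in auto)
    moreover have "{1..m} - {1..a} = {a+1..m}" by auto
    ultimately have "f ` {a+1..m} = {1..m} - E" using fm E_def by simp
    then have hf: "bij_betw f {a+1..m} ({1..m} - E)" unfolding bij_betw_def using injf by (auto intro: inj_on_subset)
    have "bij_betw (f \<circ> (\<lambda>j. a + j)) {1..b} ({1..m} - E)" by (rule bij_betw_trans[OF hb hf])
    then show ?thesis unfolding f2_def comp_def .
  qed
  define fA where "fA = the_inv_into {1..a} (posT bs) \<circ> f"
  define fB where "fB = the_inv_into {1..b} (posF bs) \<circ> f2"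
  have fAb: "bij_betw fA {1..a} {1..a}" unfolding fA_def
    by (rule bij_betw_trans[OF fE bij_betw_the_inv_into[OF pTb]])
  have fBb: "bij_betw fB {1..b} {1..b}" unfolding fB_def
    by (rule bij_betw_trans[OF f2b bij_betw_the_inv_into[OF pFb]])
  have fA1: "posT bs (fA k) = f k" if "k \<in> {1..a}" for k
    unfolding fA_def comp_def using pTb fE that by (intro f_the_inv_into_f_bij_betw) (auto simp: bij_betw_def)
  have fA2: "fA k \<in> {1..a}" if "k \<in> {1..a}" for k using bij_betwE[OF fAb] that by blast
  have fB1: "posF bs (fB j) = f (a + j)" if "j \<in> {1..b}" for j
    unfolding fB_def comp_def using pFb f2b that unfolding f2_def by (intro f_the_inv_into_f_bij_betw) (auto simp: bij_betw_def)
  have fB2: "fB j \<in> {1..b}" if "j \<in> {1..b}" for j using bij_betwE[OF fBb] that by blast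
  obtain wsA where wsA: "set wsA \<subseteq> letters n" "length wsA \<le> La" "wp wsA = pf r fA a" using IHa[OF fAb] by blast
  obtain wsB where wsB: "set wsB \<subseteq> letters n" "length wsB \<le> Lb" "wp wsB = pf u fB b" using IHb[OF fBb] by blast
  define w0 where "w0 = mw r u v (bs0 a b)"
  define wM where "wM = mw r u v bs"
  have w0L: "set w0 \<subseteq> letters n" unfolding w0_def using lt rv uv by (intro mw_letters) auto
  have wML: "set wM \<subseteq> letters n" unfolding wM_def using lt rv uv by (intro mw_letters) auto
  define U where "U = wp (invw w0)"
  define M0 where "M0 = wp w0"
  define Mg where "Mg = wp wM"
  have UM: "U (M0 y) = y" for y unfolding U_def M0_def by (rule invw_inv_letters[OF w0L])
  have ct0: "ct (bs0 a b) = a" and cf0: "cf (bs0 a b) = b" by (simp_all add: bs0_ct bs0_cf)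
  have U1: "U (r, k) = (r, k)" if "1 \<le> k" "k \<le> a" for k
  proof -
    have "M0 (r, k) = (r, k)" unfolding M0_def w0_def using that ct0 by (simp add: mw_T bs0_posT)
    then show ?thesis using UM by metis
  qed
  have U2: "U (r, a + j) = (u, j)" if "1 \<le> j" "j \<le> b" for j
  proof -
    have "M0 (u, j) = (r, a + j)" unfolding M0_def w0_def using that cf0 by (simp add: mw_F bs0_posF)
    then show ?thesis using UM by metis
  qed
  have U3: "U (r, k) = (r, k - b)" if "m < k" for k
  proof -
    have "M0 (r, k - b) = (r, k)" unfolding M0_def w0_def using that ct0 cf0 ab by (simp add: mw_Ttail)
    then show ?thesis using UM by metis
  qed
  have U4: "U (u, k) = (u, k + b)" if "1 \<le> k" for k
  proof -
    have "M0 (u, k + b) = (u, k)" unfolding M0_def w0_def using that cf0 by (simp add: mw_Ftail)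
    then show ?thesis using UM by metis
  qed
  have U5: "U x = x" if "fst x \<noteq> r" "fst x \<noteq> u" for x
  proof -
    have "M0 x = x" unfolding M0_def w0_def using that by (rule mw_fix)
    then show ?thesis using UM by metis
  qed
  have U0: "U x = x" if "snd x = 0" for x unfolding U_def using that by (rule psh_fix0)
  have Mg0: "Mg x = x" if "snd x = 0" for x unfolding Mg_def using that by (rule psh_fix0)
  define ws where "ws = invw w0 @ wsA @ wsB @ wM"
  have wsL: "set ws \<subseteq> letters n" unfolding ws_def using invw_letters[OF w0L] wsA wsB wML by auto
  have wsl: "length ws \<le> La + Lb + 4 * m" unfolding ws_def w0_def wM_def
    using wsA(2) wsB(2) by (simp add: mw_length bs0_len len ab)
  have "wp ws = pf r f m"
  proof
    fix x :: point
    obtain w k where x: "x = (w, k)" by (cases x)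
    have wpws: "wp ws x = Mg (pf u fB b (pf r fA a (U x)))"
      unfolding ws_def Mg_def U_def using wsA(3) wsB(3) by simp
    show "wp ws x = pf r f m x"
    proof (cases "k = 0")
      case True
      moreover have "pf r fA a y = y" "pf u fB b y = y" "pf r f m y = y" if "snd y = 0" for y using that unfolding pf_def by auto
      ultimately show ?thesis using wpws x U0 Mg0 by simp
    next
      case k0: False
      show ?thesis
      proof (cases "w = r")
        case wr: True
        show ?thesis
        proof (cases "k \<le> a")
          case True
          have "pf r fA a (r, k) = (r, fA k)" using True k0 unfolding pf_def by simp
          moreover have "pf u fB b (r, fA k) = (r, fA k)" using ru unfolding pf_def by simp
          moreover have "Mg (r, fA k) = (r, f k)" unfolding Mg_def wM_def
            using fA2[of k] fA1[of k] True k0 cta by (simp add: mw_T)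
          moreover have "pf r f m (r, k) = (r, f k)" using True k0 ab unfolding pf_def by simp
          ultimately show ?thesis using wpws x wr U1[of k] True k0 by simp
        next
          case ka: False
          show ?thesis
          proof (cases "k \<le> m")
            case True
            define j where "j = k - a"
            have j: "1 \<le> j" "j \<le> b" "k = a + j" using ka True ab unfolding j_def by auto
            have "U (r, k) = (u, j)" using U2[of j] j by simp
            moreover have "pf r fA a (u, j) = (u, j)" using ru unfolding pf_def by simp
            moreover have "pf u fB b (u, j) = (u, fB j)" using j unfolding pf_def by simp
            moreover have "Mg (u, fB j) = (r, f k)" unfolding Mg_def wM_def
              using fB2[of j] fB1[of j] j cfb by (simp add: mw_F)
            moreover have "pf r f m (r, k) = (r, f k)" using True k0 unfolding pf_def by simp
            ultimately show ?thesis using wpws x wr by simp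
          next
            case False
            have "U (r, k) = (r, k - b)" using U3 False by simp
            moreover have "a < k - b" using False ab by linarith
            moreover have "pf r fA a (r, k - b) = (r, k - b)" using calculation(2) unfolding pf_def by simp
            moreover have "pf u fB b (r, k - b) = (r, k - b)" using ru unfolding pf_def by simp
            moreover have "Mg (r, k - b) = (r, k)" unfolding Mg_def wM_def
              using False ab cta cfb by (simp add: mw_Ttail)
            moreover have "pf r f m (r, k) = (r, k)" using False unfolding pf_def by simp
            ultimately show ?thesis using wpws x wr by simp
          qed
        qed
      next
        case wr: False
        show ?thesis
        proof (cases "w = u")
          case True
          have "U (u, k) = (u, k + b)" using U4 k0 by simp
          moreover have "pf r fA a (u, k + b) = (u, k + b)" using ru unfolding pf_def by simp
          moreover have "pf u fB b (u, k + b) = (u, k + b)" using k0 unfolding pf_def by simp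
          moreover have "Mg (u, k + b) = (u, k)" unfolding Mg_def wM_def
            using k0 cfb by (simp add: mw_Ftail)
          moreover have "pf r f m (u, k) = (u, k)" using ru unfolding pf_def by simp
          ultimately show ?thesis using wpws x wr True by simp
        next
          case False
          have "U x = x" using U5 x wr False by simp
          moreover have "Mg x = x" unfolding Mg_def wM_def using x wr False by (intro mw_fix) auto
          moreover have "pf r fA a x = x" "pf u fB b x = x" "pf r f m x = x" using x wr False unfolding pf_def by auto
          ultimately show ?thesis using wpws by simp
        qed
      qed
    qed
  qed
  then show ?thesis using wsL wsl by blast
qed

lemma claim:
  "\<forall>(m::nat) (f::nat\<Rightarrow>nat) r u v. m \<le> 2 ^ k \<longrightarrow> r < n \<longrightarrow> u < n \<longrightarrow> v < n \<longrightarrow> tri r u v \<longrightarrow> bij_betw f {1..m} {1..m} \<longrightarrow>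
     (\<exists>ws. set ws \<subseteq> letters n \<and> length ws \<le> 4 * m * k \<and> wp ws = pf r f m)"
proof (induction k)
  case 0
  show ?case
  proof (intro allI impI)
    fix m :: nat and f :: "nat \<Rightarrow> nat" and r u v assume "m \<le> 2 ^ 0" "bij_betw f {1..m} {1..m}"
    then have "pf r f m = id" by (intro pf_small) auto
    then show "\<exists>ws. set ws \<subseteq> letters n \<and> length ws \<le> 4 * m * 0 \<and> wp ws = pf r f m"
      by (intro exI[of _ "[]"]) simp
  qed
next
  case (Suc k)
  show ?case
  proof (intro allI impI)
    fix m :: nat and f :: "nat \<Rightarrow> nat" and r u v assume m: "m \<le> 2 ^ Suc k" and lt: "r < n" "u < n" "v < n" and tri: "tri r u v"
      and bij: "bij_betw f {1..m} {1..m}"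
    show "\<exists>ws. set ws \<subseteq> letters n \<and> length ws \<le> 4 * m * Suc k \<and> wp ws = pf r f m"
    proof (cases "m \<le> 1")
      case True
      then have "pf r f m = id" using bij by (intro pf_small) auto
      then show ?thesis by (intro exI[of _ "[]"]) simp
    next
      case False
      define a where "a = m div 2"
      define b where "b = m - a"
      have a: "a \<le> 2 ^ k" "a \<le> m" unfolding a_def using m by auto
      have b: "b \<le> 2 ^ k" unfolding b_def a_def using m by auto
      have tri': "tri u r v" using tri unfolding tri_def by auto
      have "\<exists>ws. set ws \<subseteq> letters n \<and> length ws \<le> 4 * a * k + 4 * b * k + 4 * m \<and> wp ws = pf r f m"
      proof (rule split_step[OF tri lt bij a(2) b_def])
        fix g assume "bij_betw g {1..a} {1..a}"
        then show "\<exists>ws. set ws \<subseteq> letters n \<and> length ws \<le> 4 * a * k \<and> wp ws = pf r g a"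
          using Suc.IH a lt tri by blast
      next
        fix g assume "bij_betw g {1..b} {1..b}"
        then show "\<exists>ws. set ws \<subseteq> letters n \<and> length ws \<le> 4 * b * k \<and> wp ws = pf u g b"
          using Suc.IH b lt tri' by blast
      qed
      moreover have "4 * a * k + 4 * b * k + 4 * m = 4 * m * Suc k"
        using a(2) unfolding b_def by (simp add: algebra_simps)
      ultimately show ?thesis by simp
    qed
  qed
qed

lemma complexity_comp:
  assumes "houghton n c" "houghton n s"
  shows "complexity n (s \<circ> c) \<le> complexity n c + complexity n s"
  unfolding complexity_def sum.distrib[symmetric]
  by (rule sum_mono) (use houghton_comp(3)[OF assms] in auto)

lemma complexity_id: "complexity n id = 0"
  unfolding complexity_def by (simp add: pcomp_id)

lemma word_complexity:
  assumes "\<And>s. s \<in> set ws \<Longrightarrow> houghton n s \<and> complexity n s \<le> Cm"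
  shows "houghton n (word_prod ws) \<and> complexity n (word_prod ws) \<le> length ws * Cm"
  using assms
proof (induction ws rule: rev_induct)
  case Nil then show ?case unfolding word_prod_Nil using houghton_id[of n] complexity_id[of n] by (simp only: id_def) simp
next
  case (snoc s ws)
  have IH: "houghton n (word_prod ws) \<and> complexity n (word_prod ws) \<le> length ws * Cm"
    using snoc by auto
  have s: "houghton n s \<and> complexity n s \<le> Cm" using snoc.prems by simp
  have e1: "word_prod (ws @ [s]) = s \<circ> word_prod ws" by (simp only: word_prod_append word_prod_single)
  have e2: "length (ws @ [s]) * Cm = length ws * Cm + Cm" by simp
  have h: "houghton n (s \<circ> word_prod ws)" using IH s houghton_comp(1) by blast
  have c: "complexity n (s \<circ> word_prod ws) \<le> length ws * Cm + Cm"
    using complexity_comp[of n "word_prod ws" s] IH s by linarith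
  show ?case unfolding e1 e2 using h c by (rule conjI)
qed

lemma decomp:
  assumes n3: "3 \<le> n" and h: "houghton n \<sigma>" and k0: "complexity n \<sigma> \<le> 2 ^ k"
  shows "\<exists>ws. set ws \<subseteq> letters n \<and> length ws \<le> 2 * complexity n \<sigma> + 4 * complexity n \<sigma> * k \<and> wp ws = \<sigma>"
proof -
  define P where "P = complexity n \<sigma>"
  define M where "M = (\<lambda>i. pcomp \<sigma> i)"
  define M' where "M' = (\<lambda>i. nat (int (pcomp \<sigma> i) + transl \<sigma> i))"
  define js where "js = [1..<n]"
  have js: "distinct js" "0 \<notin> set js" "set js = {1..<n}" unfolding js_def by auto
  define wG where "wG = gw M js"
  define wG' where "wG' = gw M' js"
  have LG: "set wG \<subseteq> letters n" "set wG' \<subseteq> letters n" unfolding wG_def wG'_def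
    using js(3) by (auto intro!: gw_letters)
  define G where "G = wp wG"
  define Gi where "Gi = wp (invw wG)"
  define G' where "G' = wp wG'"
  define G'i where "G'i = wp (invw wG')"
  have GiG: "Gi (G x) = x" for x unfolding Gi_def G_def by (rule invw_inv_letters[OF LG(1)])
  have GGi: "G (Gi x) = x" for x unfolding Gi_def G_def by (rule invw_inv_letters2[OF LG(1)])
  have G'iG': "G'i (G' x) = x" for x unfolding G'i_def G'_def by (rule invw_inv_letters[OF LG(2)])
  have G'G'i: "G' (G'i x) = x" for x unfolding G'i_def G'_def by (rule invw_inv_letters2[OF LG(2)])
  define SM where "SM = sum_list (map M js)"
  define SM' where "SM' = sum_list (map M' js)"
  have SMsum: "SM = (\<Sum>i\<in>{1..<n}. M i)" unfolding SM_def js_def by (simp add: sum_list_distinct_conv_sum_set)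
  have SM'sum: "SM' = (\<Sum>i\<in>{1..<n}. M' i)" unfolding SM'_def js_def by (simp add: sum_list_distinct_conv_sum_set)
  have split0: "(\<Sum>i<n. g i) = g 0 + (\<Sum>i\<in>{1..<n}. g i)" for g :: "nat \<Rightarrow> nat"
  proof -
    have "{..<n} = insert 0 {1..<n}" using n3 by auto
    then show ?thesis by simp
  qed
  have Pdef: "P = M 0 + SM" unfolding P_def complexity_def SMsum M_def using split0 by simp
  define T' where "T' = M' 0 + SM'"
  have Gray: "Gi (i, j) = (i, M i + j)" if "1 \<le> i" "i < n" "1 \<le> j" for i j
  proof -
    have "G (i, M i + j) = (i, j)" unfolding G_def wG_def using js that by (intro gw_ray) auto
    then show ?thesis using GiG by metis
  qed
  have Gzero: "Gi (0, SM + k) = (0, k)" if "1 \<le> k" for k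
  proof -
    have "G (0, k) = (0, k + SM)" unfolding G_def wG_def SM_def using js that by (intro gw_zero) auto
    then show ?thesis using GiG by (metis add.commute)
  qed
  have Gfix: "Gi x = x" if "n \<le> fst x" for x
  proof -
    have "G x = x" unfolding G_def wG_def using js that n3 by (intro gw_fix) auto
    then show ?thesis using GiG by metis
  qed
  have G'ray: "G' (i, M' i + j) = (i, j)" if "1 \<le> i" "i < n" "1 \<le> j" for i j
    unfolding G'_def wG'_def using js that by (intro gw_ray) auto
  have G'zero: "G' (0, k) = (0, k + SM')" if "1 \<le> k" for k
    unfolding G'_def wG'_def SM'_def using js that by (intro gw_zero) auto
  have G'fix: "G' x = x" if "n \<le> fst x" for x
    unfolding G'_def wG'_def using js that n3 by (intro gw_fix) auto
  have G0: "Gi x = x" "G' x = x" if "snd x = 0" for x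
    unfolding Gi_def G'_def using that by (auto intro: psh_fix0)
  have sfix: "\<sigma> x = x" if "n \<le> fst x \<or> snd x = 0" for x
    using houghton_fix[OF h] that unfolding rays_def by (cases x) auto
  define \<pi> where "\<pi> = G' \<circ> \<sigma> \<circ> Gi"
  have \<sigma>ray: "\<sigma> (i, M i + j) = (i, M' i + j)" if "i < n" "1 \<le> j" for i j
  proof -
    have "pcomp \<sigma> i < M i + j" unfolding M_def using that by simp
    from nondefect[OF h that(1) this] have "\<sigma> (i, M i + j) = (i, nat (int (M i + j) + transl \<sigma> i))" by simp
    moreover have "nat (int (M i + j) + transl \<sigma> i) = M' i + j"
      unfolding M_def M'_def using pcomp_transl_nonneg[OF h that(1)] by simp
    ultimately show ?thesis by simp
  qed
  have \<pi>ray: "\<pi> (i, j) = (i, j)" if "1 \<le> i" "i < n" "1 \<le> j" for i j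
    unfolding \<pi>_def using Gray[OF that] \<sigma>ray[of i j] G'ray[OF that] that by simp
  have \<pi>zero: "\<pi> (0, P + j) = (0, T' + j)" if "1 \<le> j" for j
  proof -
    have "Gi (0, P + j) = (0, M 0 + j)" using Gzero[of "M 0 + j"] that Pdef by (simp add: add.commute add.left_commute)
    moreover have "\<sigma> (0, M 0 + j) = (0, M' 0 + j)" using \<sigma>ray[of 0 j] n3 that by simp
    moreover have "G' (0, M' 0 + j) = (0, T' + j)" using G'zero[of "M' 0 + j"] that unfolding T'_def by simp
    ultimately show ?thesis unfolding \<pi>_def by simp
  qed
  have \<pi>fix: "\<pi> x = x" if "n \<le> fst x \<or> snd x = 0" for x
  proof -
    have a: "Gi x = x" using that Gfix G0(1) by blast
    have b: "\<sigma> x = x" using sfix that by blast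
    have c: "G' x = x" using that G'fix G0(2) by blast
    show ?thesis unfolding \<pi>_def using a b c by simp
  qed
  have bij\<pi>: "bij \<pi>"
  proof -
    have "bij G'" by (rule bij_betw_byWitness[of _ G'i]) (use G'iG' G'G'i in auto)
    moreover have "bij Gi" by (rule bij_betw_byWitness[of _ G]) (use GiG GGi in auto)
    moreover have "bij \<sigma>" by (rule houghton_bij[OF h])
    ultimately show ?thesis unfolding \<pi>_def by (intro bij_comp) auto
  qed
  define Z where "Z = (\<lambda>k. (0::nat, k)) ` {1..P}"
  define Z' where "Z' = (\<lambda>k. (0::nat, k)) ` {1..T'}"
  have \<pi>out: "\<pi> x = (if fst x = 0 \<and> P < snd x then (0, T' + (snd x - P)) else x)" if "x \<notin> Z" for x
  proof -
    obtain w k where x: "x = (w, k)" by (cases x)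
    show ?thesis
    proof (cases "k = 0")
      case True then show ?thesis using \<pi>fix x by simp
    next
      case k0: False
      show ?thesis
      proof (cases "w = 0")
        case True
        then have "P < k" using that x k0 unfolding Z_def by auto
        then show ?thesis using \<pi>zero[of "k - P"] x True by simp
      next
        case False
        then show ?thesis using \<pi>ray[of w k] \<pi>fix[of x] x k0 by (cases "w < n") auto
      qed
    qed
  qed
  have img: "\<pi> ` (- Z) = - Z'"
  proof
    show "\<pi> ` (- Z) \<subseteq> - Z'"
    proof
      fix y assume "y \<in> \<pi> ` (- Z)"
      then obtain x where x: "x \<notin> Z" "y = \<pi> x" by auto
      show "y \<in> - Z'"
      proof (cases "fst x = 0 \<and> P < snd x")
        case True then show ?thesis using \<pi>out[OF x(1)] x unfolding Z'_def by auto
      next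
        case False
        then have "y = x" using \<pi>out[OF x(1)] x(2) by auto
        then show ?thesis using x False unfolding Z_def Z'_def by (cases x) auto
      qed
    qed
  next
    show "- Z' \<subseteq> \<pi> ` (- Z)"
    proof
      fix y assume y: "y \<in> - Z'"
      obtain w k where yk: "y = (w, k)" by (cases y)
      show "y \<in> \<pi> ` (- Z)"
      proof (cases "w = 0 \<and> 1 \<le> k")
        case True
        then have "T' < k" using y yk unfolding Z'_def by auto
        moreover have "(0, P + (k - T')) \<notin> Z" unfolding Z_def using calculation by auto
        moreover have "\<pi> (0, P + (k - T')) = y" using \<pi>zero[of "k - T'"] True yk calculation(1) by simp
        ultimately show ?thesis by (metis ComplI imageI)
      next
        case False
        then have "y \<notin> Z" unfolding Z_def using yk by auto
        moreover have "\<pi> y = y" using \<pi>out[OF calculation] False yk by auto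
        ultimately show ?thesis by (metis ComplI imageI)
      qed
    qed
  qed
  have imgZ: "\<pi> ` Z = Z'"
  proof -
    have "- (\<pi> ` Z) = - Z'" using img bij_image_Compl_eq[OF bij\<pi>, of Z] by simp
    then show ?thesis by simp
  qed
  have cZ: "card Z = P" unfolding Z_def by (simp add: card_image inj_on_def)
  have cZ': "card Z' = T'" unfolding Z'_def by (simp add: card_image inj_on_def)
  have "card (\<pi> ` Z) = card Z" using bij\<pi> by (intro card_image) (auto simp: bij_def intro: inj_on_subset)
  then have TP: "T' = P" using imgZ cZ cZ' by simp
  have \<pi>Z: "\<pi> ` Z = Z" using imgZ TP Z_def Z'_def by simp
  define f where "f = (\<lambda>k. snd (\<pi> (0, k)))"
  have \<pi>f: "\<pi> (0, k) = (0, f k) \<and> f k \<in> {1..P}" if "k \<in> {1..P}" for k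
  proof -
    have "\<pi> (0, k) \<in> Z" using \<pi>Z that unfolding Z_def by blast
    then show ?thesis unfolding Z_def f_def by auto
  qed
  have fb: "bij_betw f {1..P} {1..P}"
    unfolding bij_betw_def
  proof
    show "inj_on f {1..P}"
    proof (rule inj_onI)
      fix a b assume "a \<in> {1..P}" "b \<in> {1..P}" "f a = f b"
      then have "\<pi> (0, a) = \<pi> (0, b)" using \<pi>f by metis
      then show "a = b" using bij\<pi> by (auto simp: bij_def inj_def)
    qed
    show "f ` {1..P} = {1..P}"
    proof
      show "f ` {1..P} \<subseteq> {1..P}" using \<pi>f by auto
      show "{1..P} \<subseteq> f ` {1..P}"
      proof
        fix y assume "y \<in> {1..P}"
        then have "(0, y) \<in> \<pi> ` Z" using \<pi>Z unfolding Z_def by auto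
        then obtain k where k: "k \<in> {1..P}" "\<pi> (0, k) = (0, y)" unfolding Z_def by auto
        then show "y \<in> f ` {1..P}" using \<pi>f[OF k(1)] by auto
      qed
    qed
  qed
  have \<pi>pf: "\<pi> = pf 0 f P"
  proof
    fix x :: point
    show "\<pi> x = pf 0 f P x"
    proof (cases "x \<in> Z")
      case True
      then obtain k where k: "k \<in> {1..P}" "x = (0, k)" unfolding Z_def by auto
      then show ?thesis using \<pi>f[OF k(1)] unfolding pf_def by simp
    next
      case False
      then have "\<not> (fst x = 0 \<and> 1 \<le> snd x \<and> snd x \<le> P)" unfolding Z_def by (cases x) auto
      moreover have "\<pi> x = x" using \<pi>out[OF False] calculation TP by (cases x) auto
      ultimately show ?thesis unfolding pf_def by auto
    qed
  qed
  have tri: "tri 0 1 2" by (simp add: tri_def)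
  have "\<exists>ws. set ws \<subseteq> letters n \<and> length ws \<le> 4 * P * k \<and> wp ws = pf 0 f P"
    apply (rule claim[of k n, rule_format])
    using k0 n3 tri fb unfolding P_def by auto
  then obtain w\<pi> where w\<pi>: "set w\<pi> \<subseteq> letters n" "length w\<pi> \<le> 4 * P * k" "wp w\<pi> = pf 0 f P"
    by blast
  define ws where "ws = wG @ w\<pi> @ invw wG'"
  have wpws: "wp ws = \<sigma>"
  proof
    fix x
    have "wp ws x = G'i (\<pi> (G x))" unfolding ws_def G'i_def G_def using w\<pi>(3) \<pi>pf by simp
    also have "\<dots> = \<sigma> x" unfolding \<pi>_def using G'iG' GiG by simp
    finally show "wp ws x = \<sigma> x" .
  qed
  have wsL: "set ws \<subseteq> letters n" unfolding ws_def using LG w\<pi>(1) invw_letters[OF LG(2)] by auto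
  have l1: "length wG \<le> P" unfolding wG_def gw_length using Pdef SM_def by simp
  have l2: "length wG' \<le> P" unfolding wG'_def gw_length using TP T'_def SM'_def by simp
  have L: "length ws \<le> 2 * P + 4 * P * k" unfolding ws_def using l1 l2 w\<pi>(2) by simp
  show ?thesis unfolding P_def[symmetric] using wpws wsL L by blast
qed

lemma exists_k: "1 \<le> (P::nat) \<Longrightarrow> \<exists>k. P \<le> 2 ^ k \<and> 2 ^ k < 2 * P"
proof -
  assume P: "1 \<le> P"
  have ex: "\<exists>k. P \<le> 2 ^ k" using less_exp[of P] by (intro exI[of _ P]) simp
  define k where "k = (LEAST k. P \<le> 2 ^ k)"
  have k1: "P \<le> 2 ^ k" unfolding k_def using LeastI_ex[OF ex] .
  show ?thesis
  proof (cases k)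
    case 0 then show ?thesis using k1 P by (intro exI[of _ k]) simp
  next
    case (Suc j)
    then have "\<not> P \<le> 2 ^ j" using not_less_Least[of j "\<lambda>k. P \<le> 2 ^ k"] unfolding k_def by simp
    then show ?thesis using k1 Suc by (intro exI[of _ k]) simp
  qed
qed

lemma real_bound:
  assumes P2: "2 \<le> (P::nat)" and kP: "(2::nat) ^ k < 2 * P"
  shows "real Lm * real (2 * P + 4 * P * k) \<le> (real Lm + 1) * 10 / ln 2 * real P * ln (real P)"
proof -
  have l2: "0 < ln (2::real)" by simp
  have lP: "ln 2 \<le> ln (real P)" using P2 by simp
  have "real ((2::nat) ^ k) < real (2 * P)" using kP by linarith
  then have "(2::real) ^ k < 2 * real P" by simp
  then have "ln ((2::real) ^ k) < ln (2 * real P)" using P2 by (intro ln_less_cancel_iff[THEN iffD2]) auto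
  then have "real k * ln 2 < ln 2 + ln (real P)" using P2 by (simp add: ln_realpow ln_mult)
  then have kb: "real k * ln 2 \<le> 2 * ln (real P)" using lP by linarith
  have e1: "2 * real P * ln 2 \<le> 2 * real P * ln (real P)" using lP by (intro mult_left_mono) auto
  have e2: "4 * real P * (real k * ln 2) \<le> 4 * real P * (2 * ln (real P))" using kb by (intro mult_left_mono) auto
  have "real (2 * P + 4 * P * k) * ln 2 = 2 * real P * ln 2 + 4 * real P * (real k * ln 2)" by (simp add: algebra_simps)
  also have "\<dots> \<le> 10 * real P * ln (real P)" using e1 e2 by linarith
  finally have "real (2 * P + 4 * P * k) \<le> 10 * real P * ln (real P) / ln 2" using l2 by (simp add: field_simps)
  then have a: "real (2 * P + 4 * P * k) \<le> 10 / ln 2 * real P * ln (real P)" by simp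
  have nn: "0 \<le> 10 / ln 2 * real P * ln (real P)" using l2 lP P2 by auto
  have ineq: "real Lm * real (2 * P + 4 * P * k) \<le> (real Lm + 1) * (10 / ln 2 * real P * ln (real P))"
    using a nn by (intro mult_mono) auto
  have eq: "(real Lm + 1) * (10 / ln 2 * real P * ln (real P)) = (real Lm + 1) * 10 / ln 2 * real P * ln (real P)"
    by (simp add: field_simps)
  show ?thesis using ineq unfolding eq .
qed

lemma convert:
  assumes "set ws \<subseteq> L"
    and "\<And>l. l \<in> L \<Longrightarrow> set (sw l) \<subseteq> A \<and> word_prod (sw l) = psh (fst l) (snd l) \<and> length (sw l) \<le> Lm"
  shows "set (concat (map sw ws)) \<subseteq> A \<and> word_prod (concat (map sw ws)) = wp ws \<and> length (concat (map sw ws)) \<le> Lm * length ws"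
  using assms(1)
proof (induction ws)
  case Nil then show ?case by (simp add: word_prod_Nil)
next
  case (Cons l ws)
  obtain i j where l: "l = (i, j)" by (cases l)
  have sl: "set (sw l) \<subseteq> A \<and> word_prod (sw l) = psh i j \<and> length (sw l) \<le> Lm" using assms(2) Cons.prems l by auto
  have IH: "set (concat (map sw ws)) \<subseteq> A \<and> word_prod (concat (map sw ws)) = wp ws \<and> length (concat (map sw ws)) \<le> Lm * length ws"
    using Cons by auto
  have "word_prod (concat (map sw (l # ws))) = wp (l # ws)"
    using IH sl l by (simp add: word_prod_append wp_Cons)
  then show ?case using IH sl by auto
qed

theorem mainTheorem5:
  fixes n :: nat and S :: "perm set"
  assumes "3 \<le> n" and "finite S" and "generates_houghton n S"
  shows "\<exists>C K :: real. C > 0 \<and> K > 0 \<and>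
           (\<forall>\<sigma>. houghton n \<sigma> \<and> complexity n \<sigma> \<ge> 2 \<longrightarrow>
              real (complexity n \<sigma>) / C \<le> real (word_length S \<sigma>) \<and>
              real (word_length S \<sigma>) \<le> K * real (complexity n \<sigma>) * ln (real (complexity n \<sigma>)))"
proof -
  note n3 = assms(1)
  have Sh: "\<And>s. s \<in> S \<Longrightarrow> houghton n s" using assms(3) unfolding generates_houghton_def by auto
  have gen: "\<And>\<sigma>. houghton n \<sigma> \<Longrightarrow> \<exists>ws. set ws \<subseteq> gen_letters S \<and> word_prod ws = \<sigma>"
    using assms(3) unfolding generates_houghton_def by auto
  have finG: "finite (gen_letters S)" unfolding gen_letters_def using assms(2) by simp
  have Gh: "\<And>s. s \<in> gen_letters S \<Longrightarrow> houghton n s"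
    unfolding gen_letters_def using Sh houghton_inv by auto
  define Cm where "Cm = Max (insert 0 (complexity n ` gen_letters S))"
  have Cm: "\<And>s. s \<in> gen_letters S \<Longrightarrow> complexity n s \<le> Cm"
    unfolding Cm_def using finG by (intro Max_ge) auto
  define C where "C = real Cm + 1"
  define sw where "sw = (\<lambda>l::nat \<times> nat. SOME ws. set ws \<subseteq> gen_letters S \<and> word_prod ws = psh (fst l) (snd l))"
  have finL: "finite (letters n)"
    by (rule finite_subset[of _ "{..<n} \<times> {..<n}"]) (auto simp: letters_def)
  have swp: "set (sw l) \<subseteq> gen_letters S \<and> word_prod (sw l) = psh (fst l) (snd l)" if "l \<in> letters n" for l
  proof -
    have "houghton n (psh (fst l) (snd l))" using that by (intro houghton_psh) (auto simp: letters_def)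
    then have "\<exists>ws. set ws \<subseteq> gen_letters S \<and> word_prod ws = psh (fst l) (snd l)" by (rule gen)
    then show ?thesis unfolding sw_def by (rule someI_ex)
  qed
  define Lm where "Lm = Max (insert 0 ((\<lambda>l. length (sw l)) ` letters n))"
  have Lm: "length (sw l) \<le> Lm" if "l \<in> letters n" for l
    unfolding Lm_def using finL that by (intro Max_ge) auto
  define K where "K = (real Lm + 1) * 10 / ln 2"
  have Cpos: "C > 0" unfolding C_def by simp
  have Kpos: "K > 0" unfolding K_def by simp
  have main: "real (complexity n \<sigma>) / C \<le> real (word_length S \<sigma>) \<and>
      real (word_length S \<sigma>) \<le> K * real (complexity n \<sigma>) * ln (real (complexity n \<sigma>))"
    if h: "houghton n \<sigma>" and P2: "complexity n \<sigma> \<ge> 2" for \<sigma>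
  proof
    define P where "P = complexity n \<sigma>"
    have ex: "\<exists>m ws. length ws = m \<and> set ws \<subseteq> gen_letters S \<and> word_prod ws = \<sigma>" using gen[OF h] by blast
    obtain ws0 where ws0: "length ws0 = word_length S \<sigma>" "set ws0 \<subseteq> gen_letters S" "word_prod ws0 = \<sigma>"
      using LeastI_ex[OF ex] unfolding word_length_def by blast
    have "complexity n (word_prod ws0) \<le> length ws0 * Cm"
      using word_complexity[of ws0 n Cm] ws0(2) Gh Cm by blast
    then have "P \<le> word_length S \<sigma> * Cm" using ws0 unfolding P_def by simp
    then have "real P \<le> real (word_length S \<sigma>) * real Cm" by (metis of_nat_le_iff of_nat_mult)
    also have "\<dots> \<le> real (word_length S \<sigma>) * C" unfolding C_def by (intro mult_left_mono) auto
    finally show "real (complexity n \<sigma>) / C \<le> real (word_length S \<sigma>)"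
      unfolding P_def using Cpos by (simp add: divide_le_eq)
  next
    define P where "P = complexity n \<sigma>"
    obtain k where k: "P \<le> 2 ^ k" "2 ^ k < 2 * P" using exists_k[of P] P2 unfolding P_def by auto
    obtain ws where ws: "set ws \<subseteq> letters n" "length ws \<le> 2 * P + 4 * P * k" "wp ws = \<sigma>"
      using decomp[OF n3 h, of k] k unfolding P_def by blast
    have cv: "set (concat (map sw ws)) \<subseteq> gen_letters S \<and> word_prod (concat (map sw ws)) = wp ws
        \<and> length (concat (map sw ws)) \<le> Lm * length ws"
      by (rule convert[OF ws(1)]) (use swp Lm in blast)
    have "word_length S \<sigma> \<le> length (concat (map sw ws))"
      unfolding word_length_def using cv ws(3) by (intro Least_le) blast
    also have "\<dots> \<le> Lm * (2 * P + 4 * P * k)" using cv ws(2) by (meson le_trans mult_le_mono2)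
    finally have "real (word_length S \<sigma>) \<le> real Lm * real (2 * P + 4 * P * k)"
      by (metis of_nat_le_iff of_nat_mult)
    also have "\<dots> \<le> K * real P * ln (real P)" unfolding K_def
      using real_bound[of P k Lm] P2 k(2) unfolding P_def by simp
    finally show "real (word_length S \<sigma>) \<le> K * real (complexity n \<sigma>) * ln (real (complexity n \<sigma>))"
      unfolding P_def .
  qed
  show ?thesis using Cpos Kpos main by blast
qed

end
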